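(* Let $G$ be a $k$-regular graph with $n$ vertices, where $n\geq 4k$, and let $x$ be a vertex of $G$. Then $x$ is adjacent to at most $\binom{k}{2}(n-2k)+\binom{k}{3}$ cotriangles of $G$. Moreover, if this bound is attained, then the connected component of $G$ containing $x$ is isomorphic to $K_{k,k}$.
   Context: All graphs are finite and simple. A cotriangle in $G$ is an independent set of three vertices of $G$. A vertex $x$ of $G$ is adjacent to a cotriangle $T$ if $x$ is adjacent in $G$ to at least two vertices of $T$. $K_{k,k}$ is the complete bipartite graph with both parts of size $k$. *)

theory Defs
  imports Main
begin

definition simple_graph :: "'a set \<Rightarrow> ('a \<Rightarrow> 'a \<Rightarrow> bool) \<Rightarrow> bool" where
  "simple_graph V E \<longleftrightarrow> finite V \<and> (\<forall>u v. E u v \<longrightarrow> u \<in> V \<and> v \<in> V)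
     \<and> (\<forall>u v. E u v \<longrightarrow> E v u) \<and> (\<forall>v. \<not> E v v)"

definition neighbours :: "'a set \<Rightarrow> ('a \<Rightarrow> 'a \<Rightarrow> bool) \<Rightarrow> 'a \<Rightarrow> 'a set" where
  "neighbours V E x = {y \<in> V. E x y}"

definition regular :: "'a set \<Rightarrow> ('a \<Rightarrow> 'a \<Rightarrow> bool) \<Rightarrow> nat \<Rightarrow> bool" where
  "regular V E k \<longleftrightarrow> (\<forall>v \<in> V. card (neighbours V E v) = k)"

definition cotriangle :: "'a set \<Rightarrow> ('a \<Rightarrow> 'a \<Rightarrow> bool) \<Rightarrow> 'a set \<Rightarrow> bool" where
  "cotriangle V E T \<longleftrightarrow> T \<subseteq> V \<and> card T = 3 \<and> (\<forall>u \<in> T. \<forall>v \<in> T. \<not> E u v)"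

definition adj_cotriangle :: "'a set \<Rightarrow> ('a \<Rightarrow> 'a \<Rightarrow> bool) \<Rightarrow> 'a \<Rightarrow> 'a set \<Rightarrow> bool" where
  "adj_cotriangle V E x T \<longleftrightarrow> card {t \<in> T. E x t} \<ge> 2"

definition adj_cotriangles :: "'a set \<Rightarrow> ('a \<Rightarrow> 'a \<Rightarrow> bool) \<Rightarrow> 'a \<Rightarrow> 'a set set" where
  "adj_cotriangles V E x = {T. cotriangle V E T \<and> adj_cotriangle V E x T}"

definition component :: "'a set \<Rightarrow> ('a \<Rightarrow> 'a \<Rightarrow> bool) \<Rightarrow> 'a \<Rightarrow> 'a set" where
  "component V E x = {y \<in> V. (\<lambda>u v. E u v)\<^sup>*\<^sup>* x y}"

definition Kkk_verts :: "nat \<Rightarrow> (bool \<times> nat) set" where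
  "Kkk_verts k = {(b, i). i < k}"

definition Kkk_adj :: "bool \<times> nat \<Rightarrow> bool \<times> nat \<Rightarrow> bool" where
  "Kkk_adj p q \<longleftrightarrow> fst p \<noteq> fst q"

definition iso_to_Kkk :: "'a set \<Rightarrow> ('a \<Rightarrow> 'a \<Rightarrow> bool) \<Rightarrow> nat \<Rightarrow> bool" where
  "iso_to_Kkk C E k \<longleftrightarrow> (\<exists>f. bij_betw f C (Kkk_verts k) \<and>
     (\<forall>u \<in> C. \<forall>v \<in> C. E u v \<longleftrightarrow> Kkk_adj (f u) (f v)))"

end

theory Submission
  imports Defs
begin

lemma card3_eq:
  assumes "card T = 3" "a\<in>T" "b\<in>T" "c\<in>T" "a\<noteq>b" "a\<noteq>c" "b\<noteq>c"
  shows "T = {a,b,c}"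
proof -
  have "finite T" using assms(1) by (metis card.infinite zero_neq_numeral)
  moreover have "card {a,b,c} = 3" using assms by auto
  ultimately show ?thesis using assms by (metis card_subset_eq empty_subsetI insert_subset)
qed

lemma arith1:
  fixes p q d k n :: nat
  assumes "p + d = k - 1" "q + 2*k = n + d" "n \<ge> 4*k" "k \<ge> 1"
  shows "p*q \<le> (k-1)*(n-2*k) \<and> (p*q = (k-1)*(n-2*k) \<longrightarrow> d = 0)"
proof -
  define r where "r = n - 2*k"
  have q: "q = r + d" using assms unfolding r_def by linarith
  have pr: "p < r" using assms unfolding r_def by linarith
  have "(k-1)*(n-2*k) = (p+d)*r" using assms r_def by simp
  also have "\<dots> = p*r + d*r" by (simp add: algebra_simps)
  finally have e: "(k-1)*(n-2*k) = p*r + d*r" .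
  have pq: "p*q = p*r + p*d" using q by (simp add: algebra_simps)
  have "p*d \<le> d*r" using pr by (simp add: mult.commute)
  moreover have "d > 0 \<Longrightarrow> p*d < d*r" using pr by (simp add: mult.commute)
  ultimately show ?thesis using e pq by auto
qed

theorem mainTheorem5:
  fixes V :: "'a set" and E :: "'a \<Rightarrow> 'a \<Rightarrow> bool" and k n :: nat and x :: 'a
  assumes "simple_graph V E"
    and "regular V E k"
    and "k \<ge> 1"
    and "card V = n"
    and "n \<ge> 4 * k"
    and "x \<in> V"
  shows "card (adj_cotriangles V E x) \<le> (k choose 2) * (n - 2 * k) + (k choose 3)
     \<and> (card (adj_cotriangles V E x) = (k choose 2) * (n - 2 * k) + (k choose 3)
           \<longrightarrow> iso_to_Kkk (component V E x) E k)"
proof -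
  from assms(1) have finV: "finite V" and EV: "\<And>u v. E u v \<Longrightarrow> u\<in>V \<and> v\<in>V"
    and sym: "\<And>u v. E u v \<Longrightarrow> E v u" and irr: "\<And>v. \<not> E v v"
    unfolding simple_graph_def by auto
  have deg: "\<And>v. v\<in>V \<Longrightarrow> card (neighbours V E v) = k" using assms(2) unfolding regular_def by auto
  have finnb: "\<And>v. finite (neighbours V E v)" using finV unfolding neighbours_def by auto
  define N where "N = neighbours V E x"
  have N_sub: "N \<subseteq> V" and finN: "finite N" and cardN: "card N = k"
    using finnb deg assms(6) unfolding N_def neighbours_def by auto
  have memN: "\<And>y. y \<in> N \<longleftrightarrow> E x y" using EV unfolding N_def neighbours_def by auto
  have xN: "x \<notin> N" using irr memN by auto
  define A where "A = adj_cotriangles V E x"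
  define A3 where "A3 = {T\<in>A. T \<subseteq> N}"
  define A2 where "A2 = A - A3"
  have finA: "finite A" using finV unfolding A_def adj_cotriangles_def cotriangle_def
    by (metis (no_types, lifting) Collect_mono Pow_def finite_Pow_iff rev_finite_subset)
  have cardA: "card A = card A2 + card A3"
    using finA unfolding A2_def A3_def by (metis (no_types, lifting) card_Diff_subset card_mono
        le_add_diff_inverse2 mem_Collect_eq rev_finite_subset subsetI)
  have A3le: "card A3 \<le> k choose 3"
  proof -
    have "A3 \<subseteq> {T. T \<subseteq> N \<and> card T = 3}"
      unfolding A3_def A_def adj_cotriangles_def cotriangle_def by auto
    hence "card A3 \<le> card {T. T \<subseteq> N \<and> card T = 3}" using finN by (intro card_mono) auto
    thus ?thesis using n_subsets[OF finN] cardN by simp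
  qed
  define B where "B a = {b\<in>N. b\<noteq>a \<and> \<not>E a b}" for a
  define C where "C a = {c\<in>V. c\<notin>N \<and> c\<noteq>x \<and> \<not> E a c}" for a
  define Sa where "Sa a = {(b,c). b \<in> B a \<and> c \<in> C a \<and> \<not> E b c}" for a
  define S where "S = Sigma N Sa"
  have finB: "\<And>a. finite (B a)" using finN unfolding B_def by auto
  have finC: "\<And>a. finite (C a)" using finV unfolding C_def by auto
  have SaBC: "\<And>a. Sa a \<subseteq> B a \<times> C a" unfolding Sa_def by auto
  have finSa: "\<And>a. finite (Sa a)" using SaBC finB finC by (meson finite_SigmaI rev_finite_subset)
  have Sa_main: "card (Sa a) \<le> (k-1)*(n-2*k) \<and> (card (Sa a) = (k-1)*(n-2*k) \<longrightarrow>
      (\<forall>b c. b \<in> B a \<longrightarrow> c \<in> C a \<longrightarrow> \<not> E b c) \<and> (\<forall>b\<in>N. \<not> E a b))" if aN: "a \<in> N" for a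
  proof -
    define D where "D = {b\<in>N. E a b}"
    have finD: "finite D" using finN D_def by auto
    have "N - {a} = B a \<union> D" unfolding B_def D_def using irr by auto
    moreover have "B a \<inter> D = {}" unfolding B_def D_def by auto
    ultimately have cB: "card (B a) + card D = k - 1"
      using card_Un_disjoint[OF finB finD] cardN aN finN card_Diff_singleton[OF aN] by simp
    have aV: "a \<in> V" using aN N_sub by auto
    have "V = C a \<union> N \<union> (neighbours V E a - N)"
    proof (rule set_eqI)
      fix v
      have "E a x" using aN memN sym by blast
      thus "v \<in> V \<longleftrightarrow> v \<in> C a \<union> N \<union> (neighbours V E a - N)"
        using xN assms(6) N_sub unfolding C_def neighbours_def by auto
    qed
    moreover have "C a \<inter> N = {}" "(C a \<union> N) \<inter> (neighbours V E a - N) = {}"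
      unfolding C_def neighbours_def by auto
    ultimately have c1: "n = card (C a) + k + card (neighbours V E a - N)"
    proof -
      assume h: "V = C a \<union> N \<union> (neighbours V E a - N)" "C a \<inter> N = {}" "(C a \<union> N) \<inter> (neighbours V E a - N) = {}"
      have "card (C a \<union> N) = card (C a) + k" using card_Un_disjoint[OF finC finN h(2)] cardN by simp
      moreover have "card V = card (C a \<union> N) + card (neighbours V E a - N)"
        using h(1) card_Un_disjoint[OF _ _ h(3)] finC finN finnb by simp
      ultimately show ?thesis using assms(4) by simp
    qed
    have "neighbours V E a = (neighbours V E a - N) \<union> D" unfolding D_def neighbours_def using N_sub by auto
    moreover have "(neighbours V E a - N) \<inter> D = {}" unfolding D_def by auto
    ultimately have "k = card (neighbours V E a - N) + card D"
      using deg[OF aV] finnb finD card_Un_disjoint[of "neighbours V E a - N" D] by simp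
    hence cC: "card (C a) + 2*k = n + card D" using c1 by linarith
    have ar: "card (B a) * card (C a) \<le> (k-1)*(n-2*k) \<and> (card (B a) * card (C a) = (k-1)*(n-2*k) \<longrightarrow> card D = 0)"
      using arith1[OF cB cC assms(5) assms(3)] .
    have le: "card (Sa a) \<le> card (B a) * card (C a)"
      using card_mono[OF _ SaBC] finB finC by (simp add: card_cartesian_product)
    show ?thesis
    proof (intro conjI impI)
      show "card (Sa a) \<le> (k-1)*(n-2*k)" using le ar by linarith
    next
      assume eq: "card (Sa a) = (k-1)*(n-2*k)"
      hence e2: "card (Sa a) = card (B a \<times> C a)" using le ar by (simp add: card_cartesian_product)
      hence "Sa a = B a \<times> C a" using SaBC finB finC by (intro card_subset_eq) auto
      thus "\<forall>b c. b \<in> B a \<longrightarrow> c \<in> C a \<longrightarrow> \<not> E b c" unfolding Sa_def by blast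
      have "card D = 0" using eq le ar by (simp add: card_cartesian_product)
      thus "\<forall>b\<in>N. \<not> E a b" using finD D_def by auto
    qed
  qed
  have Tfacts: "finite T \<and> T \<subseteq> V \<and> card T = 3 \<and> (\<forall>u\<in>T. \<forall>v\<in>T. \<not> E u v) \<and> 2 \<le> card (T \<inter> N)" if "T \<in> A" for T
  proof -
    have c: "cotriangle V E T" "2 \<le> card {t\<in>T. E x t}" using that unfolding A_def adj_cotriangles_def adj_cotriangle_def by auto
    have "{t\<in>T. E x t} = T \<inter> N" using memN by auto
    thus ?thesis using c unfolding cotriangle_def by (metis card.infinite zero_neq_numeral)
  qed
  define F where "F T = {(a,(b,c)). a \<in> T\<inter>N \<and> b \<in> T\<inter>N \<and> a\<noteq>b \<and> c \<in> T - N}" for T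
  have FS: "F T \<subseteq> S" if "T \<in> A2" for T
  proof
    fix p assume "p \<in> F T"
    then obtain a b c where p: "p = (a,(b,c))" "a \<in> T" "a\<in>N" "b\<in>T" "b\<in>N" "a\<noteq>b" "c \<in> T" "c \<notin> N"
      unfolding F_def by auto
    have T: "T \<subseteq> V" "\<forall>u\<in>T. \<forall>v\<in>T. \<not> E u v" using Tfacts that unfolding A2_def by auto
    have "c \<noteq> x" using p T memN by metis
    thus "p \<in> S" using p T unfolding S_def Sa_def B_def C_def by auto
  qed
  have finF: "finite (F T)" if "T \<in> A2" for T
    using FS[OF that] finSa finN unfolding S_def by (meson finite_SigmaI rev_finite_subset)
  have Fcard: "2 \<le> card (F T)" if "T \<in> A2" for T
  proof -
    have tf: "finite T" "2 \<le> card (T \<inter> N)" "\<not> T \<subseteq> N" using Tfacts that unfolding A2_def A3_def by auto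
    then obtain c where c: "c \<in> T" "c \<notin> N" by auto
    obtain a b where ab: "a \<in> T\<inter>N" "b \<in> T\<inter>N" "a \<noteq> b"
    proof -
      have "\<not> card (T \<inter> N) \<le> Suc 0" using tf(2) by simp
      hence "\<not> (\<forall>a\<in>T\<inter>N. \<forall>b\<in>T\<inter>N. a = b)" using card_le_Suc0_iff_eq[of "T \<inter> N"] tf(1) by blast
      thus ?thesis using that by blast
    qed
    have "{(a,(b,c)),(b,(a,c))} \<subseteq> F T" using ab c unfolding F_def by auto
    hence "card {(a,(b,c)),(b,(a,c))} \<le> card (F T)" using finF[OF that] by (intro card_mono)
    thus ?thesis using ab by simp
  qed
  have Fdisj: "F T \<inter> F T' = {}" if "T\<in>A2" "T'\<in>A2" "T \<noteq> T'" for T T'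
  proof (rule ccontr)
    assume "F T \<inter> F T' \<noteq> {}"
    then obtain a b c where "(a,(b,c)) \<in> F T" "(a,(b,c)) \<in> F T'" by auto
    hence h: "a \<in> T" "b\<in>T" "c\<in>T" "a \<in> T'" "b\<in>T'" "c\<in>T'" "a\<noteq>b" "a\<noteq>c" "b\<noteq>c"
      unfolding F_def by auto
    have "card T = 3" "card T' = 3" using Tfacts that unfolding A2_def by auto
    hence "T = {a,b,c}" "T' = {a,b,c}" using h card3_eq by metis+
    thus False using that by simp
  qed
  have finA2: "finite A2" using finA unfolding A2_def by auto
  have "2 * card A2 = (\<Sum>T\<in>A2. 2)" by simp
  also have "\<dots> \<le> (\<Sum>T\<in>A2. card (F T))" using Fcard by (intro sum_mono) auto
  also have "\<dots> = card (\<Union>T\<in>A2. F T)" using finA2 finF Fdisj by (intro card_UN_disjoint[symmetric]) auto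
  also have "\<dots> \<le> card S" using FS finSa finN unfolding S_def by (intro card_mono) auto
  also have "\<dots> = (\<Sum>a\<in>N. card (Sa a))" unfolding S_def using finN finSa by simp
  finally have A2S: "2 * card A2 \<le> (\<Sum>a\<in>N. card (Sa a))" .
  have "(\<Sum>a\<in>N. card (Sa a)) \<le> (\<Sum>a\<in>N. (k-1)*(n-2*k))" using Sa_main by (intro sum_mono) auto
  also have "\<dots> = k * ((k-1)*(n-2*k))" using cardN by simp
  also have kc: "k * ((k-1)*(n-2*k)) = 2 * ((k choose 2) * (n - 2*k))"
  proof -
    have "even (k * (k-1))" by auto
    hence "2 * (k choose 2) = k * (k-1)" unfolding choose_two by simp
    thus ?thesis by (metis mult.assoc)
  qed
  finally have sumle: "(\<Sum>a\<in>N. card (Sa a)) \<le> 2 * ((k choose 2) * (n - 2*k))" .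
  have A2le: "card A2 \<le> (k choose 2) * (n - 2*k)" using A2S sumle by linarith
  show ?thesis
  proof (intro conjI impI)
    show "card (adj_cotriangles V E x) \<le> (k choose 2) * (n - 2 * k) + (k choose 3)"
      using A2le A3le cardA unfolding A_def by linarith
  next
    assume "card (adj_cotriangles V E x) = (k choose 2) * (n - 2 * k) + (k choose 3)"
    hence "card A2 = (k choose 2) * (n - 2 * k)" using A2le A3le cardA unfolding A_def by linarith
    hence sumeq: "(\<Sum>a\<in>N. card (Sa a)) = (\<Sum>a\<in>N. (k-1)*(n-2*k))"
      using A2S sumle cardN using kc by simp
    have eqa: "card (Sa a) = (k-1)*(n-2*k)" if "a \<in> N" for a
      using sum_mono_inv[OF sumeq _ that finN] Sa_main by blast
    have P1: "\<forall>b c. b \<in> B a \<longrightarrow> c \<in> C a \<longrightarrow> \<not> E b c" and indep: "\<forall>b\<in>N. \<not> E a b"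
      if "a \<in> N" for a using Sa_main[OF that] eqa[OF that] by auto
    have nbsub: "neighbours V E b \<subseteq> neighbours V E a" if "a \<in> N" "b \<in> N" for a b
    proof
      fix c assume c: "c \<in> neighbours V E b"
      hence cV: "c \<in> V" "E b c" unfolding neighbours_def by auto
      have cN: "c \<notin> N" using indep[OF that(2)] cV memN by auto
      have "E a c"
      proof (cases "c = x")
        case True thus ?thesis using that(1) memN sym by auto
      next
        case False
        show ?thesis
        proof (cases "b = a")
          case True thus ?thesis using cV by simp
        next
          case ba: False
          show ?thesis
          proof (rule ccontr)
            assume "\<not> E a c"
            hence "c \<in> C a" using cV cN False unfolding C_def by auto
            moreover have "b \<in> B a" using ba that indep[OF that(1)] unfolding B_def by auto
            ultimately show False using P1[OF that(1)] cV by auto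
          qed
        qed
      qed
      thus "c \<in> neighbours V E a" using cV unfolding neighbours_def by auto
    qed
    have nbeq: "neighbours V E b = neighbours V E a" if "a \<in> N" "b \<in> N" for a b
      using nbsub[OF that] deg N_sub that finnb by (metis card_subset_eq subsetD)
    obtain a0 where a0: "a0 \<in> N" using cardN assms(3) by (metis card.empty ex_in_conv not_one_le_zero)
    define R where "R = neighbours V E a0"
    have nbN: "neighbours V E a = R" if "a \<in> N" for a using nbeq[OF a0 that] R_def by simp
    have R_sub: "R \<subseteq> V" unfolding R_def neighbours_def by auto
    have xR: "x \<in> R" using a0 memN sym assms(6) unfolding R_def neighbours_def by auto
    have RN: "R \<inter> N = {}" using indep[OF a0] unfolding R_def neighbours_def by auto
    have nbR: "neighbours V E r = N" if "r \<in> R" for r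
    proof -
      have rV: "r \<in> V" using that R_sub by auto
      have "N \<subseteq> neighbours V E r"
      proof
        fix a assume "a \<in> N"
        hence "E a r" using nbN that unfolding neighbours_def by auto
        thus "a \<in> neighbours V E r" using sym EV unfolding neighbours_def by auto
      qed
      thus ?thesis using deg[OF rV] cardN finnb by (metis card_subset_eq)
    qed
    have comp: "component V E x = N \<union> R"
    proof
      show "component V E x \<subseteq> N \<union> R"
      proof
        fix y assume "y \<in> component V E x"
        hence "E\<^sup>*\<^sup>* x y" unfolding component_def by auto
        thus "y \<in> N \<union> R"
        proof (induction rule: rtranclp_induct)
          case base thus ?case using xR by auto
        next
          case (step y z)
          have zV: "z \<in> V" using step(2) EV by auto
          show ?case
          proof (cases "y \<in> N")
            case True
            hence "z \<in> neighbours V E y" using zV step(2) unfolding neighbours_def by auto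
            thus ?thesis using nbN[OF True] by auto
          next
            case False
            hence "y \<in> R" using step(3) by auto
            hence "z \<in> neighbours V E y" using zV step(2) unfolding neighbours_def by auto
            thus ?thesis using nbR[OF \<open>y \<in> R\<close>] by auto
          qed
        qed
      qed
    next
      show "N \<union> R \<subseteq> component V E x"
      proof
        fix y assume y: "y \<in> N \<union> R"
        have "E\<^sup>*\<^sup>* x y"
        proof (cases "y \<in> N")
          case True thus ?thesis using memN by auto
        next
          case False
          hence "E a0 y" using y unfolding R_def neighbours_def by auto
          moreover have "E x a0" using a0 memN by auto
          ultimately show ?thesis by (meson r_into_rtranclp rtranclp.rtrancl_into_rtrancl)
        qed
        thus "y \<in> component V E x" using y N_sub R_sub unfolding component_def by auto
      qed
    qed
    have finR: "finite R" using finnb R_def by simp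
    have cardR: "card R = k" using deg a0 N_sub R_def by auto
    obtain gN where gN: "bij_betw gN N {0..<k}" using ex_bij_betw_finite_nat[OF finN] cardN by auto
    obtain gR where gR: "bij_betw gR R {0..<k}" using ex_bij_betw_finite_nat[OF finR] cardR by auto
    define f where "f v = (if v \<in> N then (True, gN v) else (False, gR v))" for v
    have b1: "bij_betw f N ({True} \<times> {0..<k})"
    proof -
      have "bij_betw (\<lambda>v. (True, gN v)) N ({True} \<times> {0..<k})"
        using gN unfolding bij_betw_def inj_on_def by auto
      thus ?thesis by (rule bij_betw_cong[THEN iffD1, rotated]) (auto simp: f_def)
    qed
    have b2: "bij_betw f R ({False} \<times> {0..<k})"
    proof -
      have "bij_betw (\<lambda>v. (False, gR v)) R ({False} \<times> {0..<k})"
        using gR unfolding bij_betw_def inj_on_def by auto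
      moreover have "\<And>v. v \<in> R \<Longrightarrow> f v = (False, gR v)" using RN unfolding f_def by auto
      ultimately show ?thesis using bij_betw_cong[of R f "\<lambda>v. (False, gR v)"] by simp
    qed
    have KV: "Kkk_verts k = {True} \<times> {0..<k} \<union> {False} \<times> {0..<k}"
      unfolding Kkk_verts_def by auto
    have bij: "bij_betw f (N \<union> R) (Kkk_verts k)"
      unfolding KV by (rule bij_betw_combine[OF b1 b2]) auto
    have adj: "E u v \<longleftrightarrow> Kkk_adj (f u) (f v)" if "u \<in> N \<union> R" "v \<in> N \<union> R" for u v
    proof -
      have fst: "\<And>w. w \<in> N \<union> R \<Longrightarrow> fst (f w) = (w \<in> N)" unfolding f_def by auto
      have "E u v \<longleftrightarrow> (u \<in> N) \<noteq> (v \<in> N)"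
      proof (cases "u \<in> N")
        case True
        hence "neighbours V E u = R" using nbN by auto
        thus ?thesis using True that RN EV indep[OF True] unfolding neighbours_def by auto
      next
        case False
        hence uR: "u \<in> R" using that by auto
        hence "neighbours V E u = N" using nbR by auto
        thus ?thesis using False that EV N_sub R_sub unfolding neighbours_def by auto
      qed
      thus ?thesis unfolding Kkk_adj_def using fst that by auto
    qed
    show "iso_to_Kkk (component V E x) E k"
      unfolding iso_to_Kkk_def comp using bij adj by blast
  qed
qed

end
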